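(* Let $\mathcal{S}=[-\pi,\pi]$ with periodic identification of the endpoints. Let $\rho^{\mathrm d}:\mathcal{S}\times\mathbb{R}_{\ge0}\to\mathbb{R}_{\ge0}$ be smooth and periodic in $x$ with $\|\rho^{\mathrm d}(\cdot,t)\|_2\le M$ and $\|\rho^{\mathrm d}_x(\cdot,t)\|_2\le L$ for all $t\ge0$. Let $d:\mathcal{S}\times\mathbb{R}_{\ge0}\to\mathbb{R}$ satisfy $d(-\pi,t)=d(\pi,t)$ and $\|d(\cdot,t)\|_\infty\le D_1$, $\|d_x(\cdot,t)\|_\infty\le D_2$ for all $t\ge0$, with constants $D_1,D_2>0$. Let $K_{\mathrm p}>0$ and let $e$ be an $x$-periodic solution of $$e_t(x,t)=-K_{\mathrm p}e(x,t)+\big[(\rho^{\mathrm d}(x,t)-e(x,t))\,d(x,t)\big]_x.$$ Then for every $\kappa$ with $D_2<\kappa<+\infty$, if $2K_{\mathrm p}>\kappa$, the squared error norm $\|e(\cdot,t)\|_2^2$ remains bounded and $$\limsup_{t\to\infty}\|e(\cdot,t)\|_2\le\frac{2LD_1+2MD_2}{\kappa-D_2}.$$ In particular, the upper bound on the steady-state error can be made arbitrarily small by choosing $\kappa$ sufficiently large.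
   Context: Norms: $\|h(\cdot,t)\|_p=(\int_{\mathcal{S}}|h(x,t)|^p\,dx)^{1/p}$, $\|h(\cdot,t)\|_\infty=\operatorname{ess\,sup}_{\mathcal{S}}|h(x,t)|$. Subscripts $t,x$ denote partial derivatives. Background: this error equation arises for $e=\rho^{\mathrm d}-\rho$ when a multiagent density $\rho$ on the ring obeys $\rho_t+[\rho((f*\rho)+d)]_x=q$ with a velocity perturbation $d$ and control $q=K_{\mathrm p}e-[e(f*\rho^{\mathrm d})]_x-[\rho(f*e)]_x$, while $\rho^{\mathrm d}_t+[\rho^{\mathrm d}(f*\rho^{\mathrm d})]_x=0$; here $*$ is circular convolution on $\mathcal{S}$ and $f$ a periodic interaction kernel. *)

theory Defs
  imports "HOL-Analysis.Analysis"
begin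

definition S :: "real set" where
  "S = {-pi..pi}"

definition L2norm :: "(real \<Rightarrow> real) \<Rightarrow> real" where
  "L2norm h = sqrt (integral S (\<lambda>x. (h x)\<^sup>2))"

end

theory Submission
  imports Defs "HOL-Real_Asymp.Real_Asymp"
begin

lemma int_S: "continuous_on S (h::real\<Rightarrow>real) \<Longrightarrow> h integrable_on S"
  unfolding S_def by (rule integrable_continuous_interval)

lemma CS_ineq:
  fixes f g :: "real \<Rightarrow> real"
  assumes cf: "continuous_on S f" and cg: "continuous_on S g"
  shows "integral S (\<lambda>x. \<bar>f x\<bar> * \<bar>g x\<bar>) \<le> L2norm f * L2norm g"
proof -
  define A where "A = integral S (\<lambda>x. (f x)\<^sup>2)"
  define B where "B = integral S (\<lambda>x. (g x)\<^sup>2)"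
  define P where "P = integral S (\<lambda>x. \<bar>f x\<bar> * \<bar>g x\<bar>)"
  have iA: "(\<lambda>x. (f x)\<^sup>2) integrable_on S" by (rule int_S, intro continuous_intros cf)
  have iB: "(\<lambda>x. (g x)\<^sup>2) integrable_on S" by (rule int_S, intro continuous_intros cg)
  have iP: "(\<lambda>x. \<bar>f x\<bar> * \<bar>g x\<bar>) integrable_on S" by (rule int_S, intro continuous_intros cf cg)
  have A0: "A \<ge> 0" unfolding A_def by (rule integral_nonneg[OF iA]) auto
  have B0: "B \<ge> 0" unfolding B_def by (rule integral_nonneg[OF iB]) auto
  have P0: "P \<ge> 0" unfolding P_def by (rule integral_nonneg[OF iP]) auto
  have q: "0 \<le> l^2 * A - 2*l*P + B" for l
  proof -
    have eq: "(\<lambda>x. (l*\<bar>f x\<bar> - \<bar>g x\<bar>)^2) = (\<lambda>x. l^2 * (f x)\<^sup>2 - (2*l) * (\<bar>f x\<bar>*\<bar>g x\<bar>) + (g x)\<^sup>2)"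
      by (auto simp: power2_eq_square algebra_simps)
    have "0 \<le> integral S (\<lambda>x. (l*\<bar>f x\<bar> - \<bar>g x\<bar>)^2)"
      by (rule integral_nonneg) (auto intro!: int_S continuous_intros cf cg)
    also have "\<dots> = l^2 * A - 2*l*P + B"
      unfolding eq A_def B_def P_def
    proof -
      have i1: "(\<lambda>x. l^2 * (f x)\<^sup>2) integrable_on S" using integrable_on_cmult_left[OF iA, of "l^2"] by simp
      have i2: "(\<lambda>x. (2*l) * (\<bar>f x\<bar>*\<bar>g x\<bar>)) integrable_on S" using integrable_on_cmult_left[OF iP, of "2*l"] by simp
      have "integral S (\<lambda>x. l^2 * (f x)\<^sup>2 - (2*l) * (\<bar>f x\<bar>*\<bar>g x\<bar>) + (g x)\<^sup>2)
          = integral S (\<lambda>x. l^2 * (f x)\<^sup>2 - (2*l) * (\<bar>f x\<bar>*\<bar>g x\<bar>)) + integral S (\<lambda>x. (g x)\<^sup>2)"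
        by (rule integral_add[OF integrable_diff[OF i1 i2] iB])
      also have "integral S (\<lambda>x. l^2 * (f x)\<^sup>2 - (2*l) * (\<bar>f x\<bar>*\<bar>g x\<bar>)) = integral S (\<lambda>x. l^2 * (f x)\<^sup>2) - integral S (\<lambda>x. (2*l) * (\<bar>f x\<bar>*\<bar>g x\<bar>))"
        by (rule integral_diff[OF i1 i2])
      finally show "integral S (\<lambda>x. l^2 * (f x)\<^sup>2 - (2*l) * (\<bar>f x\<bar>*\<bar>g x\<bar>) + (g x)\<^sup>2) = l\<^sup>2 * integral S (\<lambda>x. (f x)\<^sup>2) - 2 * l * integral S (\<lambda>x. \<bar>f x\<bar> * \<bar>g x\<bar>) + integral S (\<lambda>x. (g x)\<^sup>2)"
        by simp
    qed
    finally show ?thesis .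
  qed
  have "P\<^sup>2 \<le> A * B"
  proof (cases "A = 0")
    case True
    show ?thesis
    proof (rule ccontr)
      assume "\<not> ?thesis"
      hence "P > 0" using True P0 by (simp add: order.strict_iff_order)
      have "0 \<le> ((B+1)/(2*P))^2 * A - 2*((B+1)/(2*P))*P + B" by (rule q)
      also have "\<dots> = -1" using True \<open>P > 0\<close> by (simp add: field_simps)
      finally show False by simp
    qed
  next
    case False
    hence "A > 0" using A0 by simp
    have "0 \<le> (P/A)^2 * A - 2*(P/A)*P + B" by (rule q)
    also have "\<dots> = B - P^2/A" using \<open>A > 0\<close> by (simp add: field_simps power2_eq_square)
    finally show ?thesis using \<open>A > 0\<close> by (simp add: field_simps)
  qed
  hence "P \<le> sqrt (A * B)" using P0 by (metis real_le_rsqrt)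
  thus ?thesis unfolding L2norm_def A_def[symmetric] B_def[symmetric] P_def[symmetric]
    by (simp add: real_sqrt_mult)
qed

lemma ftc0:
  fixes F G :: "real \<Rightarrow> real"
  assumes "\<And>x. x \<in> S \<Longrightarrow> (F has_real_derivative G x) (at x within S)"
    and "F (-pi) = F pi"
  shows "(G has_integral 0) S"
proof -
  have "(G has_integral (F pi - F (-pi))) {-pi..pi}"
    by (rule fundamental_theorem_of_calculus)
       (use assms in \<open>auto simp: S_def has_real_derivative_iff_has_vector_derivative\<close>)
  thus ?thesis using assms(2) by (simp add: S_def)
qed

lemma cont_of_deriv:
  fixes f f' :: "real \<Rightarrow> real"
  assumes "\<And>x. x \<in> S \<Longrightarrow> (f has_real_derivative f' x) (at x within S)"
  shows "continuous_on S f"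
  using assms by (metis DERIV_continuous continuous_on_eq_continuous_within)

lemma deriv_unique_S:
  fixes f :: "real \<Rightarrow> real"
  assumes "x \<in> S" "(f has_real_derivative a) (at x within S)" "(f has_real_derivative b) (at x within S)"
  shows "a = b"
  using assms vector_derivative_unique_within_closed_interval[of "-pi" pi x f a b]
  by (auto simp: S_def has_real_derivative_iff_has_vector_derivative)

lemma energy:
  fixes e ex r rx dd ddx W :: "real \<Rightarrow> real" and D1 D2 :: real
  assumes de: "\<And>x. x \<in> S \<Longrightarrow> (e has_real_derivative ex x) (at x within S)"
    and dr: "\<And>x. x \<in> S \<Longrightarrow> (r has_real_derivative rx x) (at x within S)"
    and ddd: "\<And>x. x \<in> S \<Longrightarrow> (dd has_real_derivative ddx x) (at x within S)"
    and cex: "continuous_on S ex" and crx: "continuous_on S rx" and cW: "continuous_on S W"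
    and dW: "\<And>x. x \<in> S \<Longrightarrow> ((\<lambda>y. (r y - e y) * dd y) has_real_derivative W x) (at x within S)"
    and pe: "e (-pi) = e pi" and pr: "r (-pi) = r pi" and pd: "dd (-pi) = dd pi"
    and bd: "\<And>x. x \<in> S \<Longrightarrow> \<bar>dd x\<bar> \<le> D1"
    and bdx: "\<And>x. x \<in> S \<Longrightarrow> \<bar>ddx x\<bar> \<le> D2"
  shows "integral S (\<lambda>x. e x * W x)
     \<le> D2/2 * integral S (\<lambda>x. (e x)\<^sup>2) + (D1 * L2norm rx + D2 * L2norm r) * L2norm e"
proof -
  have ce: "continuous_on S e" by (rule cont_of_deriv[OF de])
  have cr: "continuous_on S r" by (rule cont_of_deriv[OF dr])
  have cd: "continuous_on S dd" by (rule cont_of_deriv[OF ddd])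
  have "0 \<in> S" by (simp add: S_def)
  have D1: "D1 \<ge> 0" using bd[OF \<open>0 \<in> S\<close>] by simp
  have D2: "D2 \<ge> 0" using bdx[OF \<open>0 \<in> S\<close>] by simp
  have Wx: "W x = (rx x - ex x) * dd x + ddx x * (r x - e x)" if x: "x \<in> S" for x
  proof -
    have "((\<lambda>y. (r y - e y) * dd y) has_real_derivative ((rx x - ex x) * dd x + ddx x * (r x - e x))) (at x within S)"
      by (rule DERIV_mult[OF DERIV_diff[OF dr[OF x] de[OF x]] ddd[OF x]])
    thus ?thesis using deriv_unique_S[OF x dW[OF x]] by simp
  qed
  define G1 where "G1 x = (2 * e x * ex x) * dd x + ddx x * (e x * e x)" for x
  define G2 where "G2 x = (ex x * r x + e x * rx x) * dd x + ddx x * (e x * r x)" for x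
  have hG1: "(G1 has_integral 0) S"
  proof (rule ftc0[of "\<lambda>x. (e x * e x) * dd x"])
    fix x assume x: "x \<in> S"
    show "((\<lambda>x. (e x * e x) * dd x) has_real_derivative G1 x) (at x within S)"
      using DERIV_mult[OF DERIV_mult[OF de[OF x] de[OF x]] ddd[OF x]]
      by (simp add: G1_def algebra_simps)
  qed (simp add: pe pd)
  have hG2: "(G2 has_integral 0) S"
  proof (rule ftc0[of "\<lambda>x. (e x * r x) * dd x"])
    fix x assume x: "x \<in> S"
    show "((\<lambda>x. (e x * r x) * dd x) has_real_derivative G2 x) (at x within S)"
      using DERIV_mult[OF DERIV_mult[OF de[OF x] dr[OF x]] ddd[OF x]]
      by (simp add: G2_def algebra_simps)
  qed (simp add: pe pd pr)
  define J1 where "J1 x = (2 * e x * ex x) * dd x" for x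
  define J2 where "J2 x = (ex x * r x + e x * rx x) * dd x" for x
  define I1 where "I1 x = ddx x * (e x * e x)" for x
  define I2 where "I2 x = ddx x * (e x * r x)" for x
  define K where "K x = e x * rx x * dd x" for x
  define K3 where "K3 x = e x * ex x * dd x" for x
  have iJ1: "J1 integrable_on S" unfolding J1_def by (intro int_S continuous_intros ce cex cd)
  have iJ2: "J2 integrable_on S" unfolding J2_def by (intro int_S continuous_intros ce cex cd cr crx)
  have iK: "K integrable_on S" unfolding K_def by (intro int_S continuous_intros ce crx cd)
  have iK3: "K3 integrable_on S" unfolding K3_def by (intro int_S continuous_intros ce cex cd)
  have hI1: "(I1 has_integral (0 - integral S J1)) S"
  proof -
    have "((\<lambda>x. G1 x - J1 x) has_integral (0 - integral S J1)) S"
      by (rule has_integral_diff[OF hG1 integrable_integral[OF iJ1]])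
    moreover have "(\<lambda>x. G1 x - J1 x) = I1" by (auto simp: G1_def J1_def I1_def)
    ultimately show ?thesis by simp
  qed
  have hI2: "(I2 has_integral (0 - integral S J2)) S"
  proof -
    have "((\<lambda>x. G2 x - J2 x) has_integral (0 - integral S J2)) S"
      by (rule has_integral_diff[OF hG2 integrable_integral[OF iJ2]])
    moreover have "(\<lambda>x. G2 x - J2 x) = I2" by (auto simp: G2_def J2_def I2_def)
    ultimately show ?thesis by simp
  qed
  have iI1: "I1 integrable_on S" using hI1 by blast
  have iI2: "I2 integrable_on S" using hI2 by blast
  have J1K3: "integral S J1 = 2 * integral S K3"
  proof -
    have "J1 = (\<lambda>x. 2 * K3 x)" by (auto simp: J1_def K3_def)
    thus ?thesis by simp
  qed
  have eW: "((\<lambda>x. e x * W x) has_integral (integral S K + integral S I2 - integral S K3 - integral S I1)) S"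
  proof -
    have "((\<lambda>x. K x + I2 x - K3 x - I1 x) has_integral (integral S K + integral S I2 - integral S K3 - integral S I1)) S"
      by (intro has_integral_diff has_integral_add integrable_integral iK iI2 iK3 iI1)
    moreover have "x \<in> S \<Longrightarrow> K x + I2 x - K3 x - I1 x = e x * W x" for x
      by (simp add: Wx K_def I2_def K3_def I1_def algebra_simps)
    ultimately show ?thesis by (rule has_integral_eq[rotated]) simp
  qed
  have eq: "integral S (\<lambda>x. e x * W x) = integral S K + integral S I2 - integral S I1 / 2"
    using integral_unique[OF eW] integral_unique[OF hI1] J1K3 by simp
  have b1: "integral S K \<le> D1 * integral S (\<lambda>x. \<bar>e x\<bar> * \<bar>rx x\<bar>)"
  proof -
    have "integral S K \<le> integral S (\<lambda>x. D1 * (\<bar>e x\<bar> * \<bar>rx x\<bar>))"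
    proof (rule integral_le[OF iK])
      show "(\<lambda>x. D1 * (\<bar>e x\<bar> * \<bar>rx x\<bar>)) integrable_on S" by (intro int_S continuous_intros ce crx)
      fix x assume x: "x \<in> S"
      have "K x \<le> \<bar>K x\<bar>" by simp
      also have "\<dots> = (\<bar>e x\<bar> * \<bar>rx x\<bar>) * \<bar>dd x\<bar>" by (simp add: K_def abs_mult)
      also have "\<dots> \<le> (\<bar>e x\<bar> * \<bar>rx x\<bar>) * D1" by (rule mult_left_mono[OF bd[OF x]]) simp
      finally show "K x \<le> D1 * (\<bar>e x\<bar> * \<bar>rx x\<bar>)" by (simp add: mult_ac)
    qed
    thus ?thesis by simp
  qed
  have b2: "integral S I2 \<le> D2 * integral S (\<lambda>x. \<bar>e x\<bar> * \<bar>r x\<bar>)"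
  proof -
    have "integral S I2 \<le> integral S (\<lambda>x. D2 * (\<bar>e x\<bar> * \<bar>r x\<bar>))"
    proof (rule integral_le[OF iI2])
      show "(\<lambda>x. D2 * (\<bar>e x\<bar> * \<bar>r x\<bar>)) integrable_on S" by (intro int_S continuous_intros ce cr)
      fix x assume x: "x \<in> S"
      have "I2 x \<le> \<bar>I2 x\<bar>" by simp
      also have "\<dots> = (\<bar>e x\<bar> * \<bar>r x\<bar>) * \<bar>ddx x\<bar>" by (simp add: I2_def abs_mult)
      also have "\<dots> \<le> (\<bar>e x\<bar> * \<bar>r x\<bar>) * D2" by (rule mult_left_mono[OF bdx[OF x]]) simp
      finally show "I2 x \<le> D2 * (\<bar>e x\<bar> * \<bar>r x\<bar>)" by (simp add: mult_ac)
    qed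
    thus ?thesis by simp
  qed
  have b3: "- integral S I1 \<le> D2 * integral S (\<lambda>x. (e x)\<^sup>2)"
  proof -
    have "integral S (\<lambda>x. - D2 * (e x)\<^sup>2) \<le> integral S I1"
    proof (rule integral_le[OF _ iI1])
      show "(\<lambda>x. - D2 * (e x)\<^sup>2) integrable_on S" by (intro int_S continuous_intros ce)
      fix x assume x: "x \<in> S"
      have "- D2 \<le> ddx x" using bdx[OF x] by simp
      hence "- D2 * (e x * e x) \<le> ddx x * (e x * e x)" by (rule mult_right_mono) simp
      thus "- D2 * (e x)\<^sup>2 \<le> I1 x" by (simp add: I1_def power2_eq_square)
    qed
    thus ?thesis by simp
  qed
  have c1: "integral S (\<lambda>x. \<bar>e x\<bar> * \<bar>rx x\<bar>) \<le> L2norm e * L2norm rx" by (rule CS_ineq[OF ce crx])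
  have c2: "integral S (\<lambda>x. \<bar>e x\<bar> * \<bar>r x\<bar>) \<le> L2norm e * L2norm r" by (rule CS_ineq[OF ce cr])
  have "D1 * integral S (\<lambda>x. \<bar>e x\<bar> * \<bar>rx x\<bar>) \<le> D1 * (L2norm e * L2norm rx)"
    by (rule mult_left_mono[OF c1 D1])
  moreover have "D2 * integral S (\<lambda>x. \<bar>e x\<bar> * \<bar>r x\<bar>) \<le> D2 * (L2norm e * L2norm r)"
    by (rule mult_left_mono[OF c2 D2])
  ultimately show ?thesis using eq b1 b2 b3 by (simp add: algebra_simps)
qed

lemma slice:
  fixes f :: "real \<Rightarrow> real \<Rightarrow> real"
  assumes "continuous_on (S \<times> {0..}) (\<lambda>(x,t). f x t)" "t \<ge> 0"
  shows "continuous_on S (\<lambda>x. f x t)"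
proof -
  have "continuous_on S (\<lambda>x. (\<lambda>(x,t). f x t) (x, t))"
    by (rule continuous_on_compose2[OF assms(1), of S "\<lambda>x. (x,t)"]) (use assms(2) in \<open>auto intro!: continuous_intros\<close>)
  thus ?thesis by simp
qed

lemma L2_nonneg: "0 \<le> L2norm f"
proof -
  have "0 \<le> integral S (\<lambda>x. (f x)\<^sup>2)"
    by (cases "(\<lambda>x. (f x)\<^sup>2) integrable_on S") (auto intro: integral_nonneg simp: not_integrable_integral)
  thus ?thesis by (simp add: L2norm_def)
qed

lemma nonincr:
  fixes g g' :: "real \<Rightarrow> real"
  assumes "\<And>t. t \<ge> 0 \<Longrightarrow> (g has_real_derivative g' t) (at t within {0..})"
    and "\<And>t. t \<ge> 0 \<Longrightarrow> g' t \<le> 0" and "t \<ge> 0"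
  shows "g t \<le> g 0"
proof -
  have "\<exists>x\<in>{0..t}. g t - g 0 = (*) (g' x) (t - 0)"
  proof (rule mvt_very_simple[OF assms(3)])
    fix x assume "0 \<le> x" "x \<le> t"
    show "(g has_derivative (*) (g' x)) (at x within {0..t})"
      using has_field_derivative_imp_has_derivative[OF assms(1)[OF \<open>0 \<le> x\<close>]]
      by (rule has_derivative_subset) auto
  qed
  then obtain x where "x \<in> {0..t}" "g t - g 0 = g' x * t" by auto
  moreover have "g' x * t \<le> 0" using assms(2)[of x] assms(3) \<open>x \<in> {0..t}\<close>
    by (simp add: mult_nonpos_nonneg)
  ultimately show ?thesis by simp
qed

theorem theorem2:
  fixes rho rhox :: "real \<Rightarrow> real \<Rightarrow> real"
    and d dx :: "real \<Rightarrow> real \<Rightarrow> real"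
    and e ex et :: "real \<Rightarrow> real \<Rightarrow> real"
    and M L D1 D2 Kp kappa :: real
  assumes rho_nonneg: "\<forall>x\<in>S. \<forall>t\<ge>0. rho x t \<ge> 0"
    and rho_cont: "continuous_on (S \<times> {0..}) (\<lambda>(x, t). rho x t)"
    and rho_x: "\<forall>x\<in>S. \<forall>t\<ge>0. ((\<lambda>y. rho y t) has_real_derivative rhox x t) (at x within S)"
    and rhox_cont: "continuous_on (S \<times> {0..}) (\<lambda>(x, t). rhox x t)"
    and rho_per: "\<forall>t\<ge>0. rho (-pi) t = rho pi t \<and> rhox (-pi) t = rhox pi t"
    and rho_L2: "\<forall>t\<ge>0. L2norm (\<lambda>x. rho x t) \<le> M"
    and rhox_L2: "\<forall>t\<ge>0. L2norm (\<lambda>x. rhox x t) \<le> L"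
    and d_per: "\<forall>t\<ge>0. d (-pi) t = d pi t"
    and d_x: "\<forall>x\<in>S. \<forall>t\<ge>0. ((\<lambda>y. d y t) has_real_derivative dx x t) (at x within S)"
    and d_bound: "\<forall>x\<in>S. \<forall>t\<ge>0. \<bar>d x t\<bar> \<le> D1"
    and dx_bound: "\<forall>x\<in>S. \<forall>t\<ge>0. \<bar>dx x t\<bar> \<le> D2"
    and D1_pos: "D1 > 0" and D2_pos: "D2 > 0"
    and Kp_pos: "Kp > 0"
    and e_cont: "continuous_on (S \<times> {0..}) (\<lambda>(x, t). e x t)"
    and e_x: "\<forall>x\<in>S. \<forall>t\<ge>0. ((\<lambda>y. e y t) has_real_derivative ex x t) (at x within S)"
    and ex_cont: "continuous_on (S \<times> {0..}) (\<lambda>(x, t). ex x t)"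
    and e_t: "\<forall>x\<in>S. \<forall>t\<ge>0. ((\<lambda>s. e x s) has_real_derivative et x t) (at t within {0..})"
    and et_cont: "continuous_on (S \<times> {0..}) (\<lambda>(x, t). et x t)"
    and e_per: "\<forall>t\<ge>0. e (-pi) t = e pi t"
    and pde: "\<forall>x\<in>S. \<forall>t\<ge>0.
       ((\<lambda>y. (rho y t - e y t) * d y t) has_real_derivative (et x t + Kp * e x t)) (at x within S)"
    and kappa_gt: "D2 < kappa"
    and Kp_kappa: "2 * Kp > kappa"
  shows "(\<exists>B. \<forall>t\<ge>0. (L2norm (\<lambda>x. e x t))\<^sup>2 \<le> B)
    \<and> Limsup at_top (\<lambda>t. ereal (L2norm (\<lambda>x. e x t)))
        \<le> ereal ((2 * L * D1 + 2 * M * D2) / (kappa - D2))"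

proof -
  define y where "y t = integral S (\<lambda>x. (e x t)\<^sup>2)" for t
  define y' where "y' t = integral S (\<lambda>x. 2 * e x t * et x t)" for t
  define a where "a = 2 * Kp - D2"
  define c where "c = L * D1 + M * D2"
  define K where "K = 4 * c\<^sup>2 / a\<^sup>2"
  have a_pos: "a > 0" using kappa_gt Kp_kappa by (simp add: a_def)
  have "0 \<le> L2norm (\<lambda>x. rhox x 0)" by (rule L2_nonneg)
  hence L0: "L \<ge> 0" using rhox_L2 by force
  have "0 \<le> L2norm (\<lambda>x. rho x 0)" by (rule L2_nonneg)
  hence M0: "M \<ge> 0" using rho_L2 by force
  have c0: "c \<ge> 0" using L0 M0 D1_pos D2_pos by (simp add: c_def)
  have ce: "continuous_on S (\<lambda>x. e x t)" if "t \<ge> 0" for t by (rule slice[OF e_cont that])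
  have cet: "continuous_on S (\<lambda>x. et x t)" if "t \<ge> 0" for t by (rule slice[OF et_cont that])
  have cex: "continuous_on S (\<lambda>x. ex x t)" if "t \<ge> 0" for t by (rule slice[OF ex_cont that])
  have crx: "continuous_on S (\<lambda>x. rhox x t)" if "t \<ge> 0" for t by (rule slice[OF rhox_cont that])
  have y0: "y t \<ge> 0" for t unfolding y_def
    by (cases "(\<lambda>x. (e x t)\<^sup>2) integrable_on S") (auto intro: integral_nonneg simp: not_integrable_integral)
  have dy: "(y has_real_derivative y' t) (at t within {0..})" if t: "t \<ge> 0" for t
  proof -
    have "((\<lambda>s. integral (cbox (-pi) pi) (\<lambda>x. (e x s)\<^sup>2)) has_field_derivative
        integral (cbox (-pi) pi) (\<lambda>x. 2 * e x t * et x t)) (at t within {0..})"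
    proof (rule leibniz_rule_field_derivative[where f="\<lambda>s x. (e x s)\<^sup>2" and fx="\<lambda>s x. 2 * e x s * et x s"])
      fix s x :: real assume s: "s \<in> {0..}" and x: "x \<in> cbox (-pi) pi"
      hence xs: "x \<in> S" and s0: "s \<ge> 0" by (auto simp: S_def)
      have "((\<lambda>s. e x s * e x s) has_field_derivative et x s * e x s + et x s * e x s) (at s within {0..})"
        by (rule DERIV_mult[OF e_t[rule_format, OF xs s0] e_t[rule_format, OF xs s0]])
      thus "((\<lambda>s. (e x s)\<^sup>2) has_field_derivative 2 * e x s * et x s) (at s within {0..})"
        by (simp add: power2_eq_square algebra_simps)
    next
      fix s :: real assume s: "s \<in> {0..}"
      have "(\<lambda>x. (e x s)\<^sup>2) integrable_on S" by (intro int_S continuous_intros ce) (use s in auto)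
      thus "(\<lambda>x. (e x s)\<^sup>2) integrable_on cbox (-pi) pi" by (simp add: S_def)
    next
      have c1: "continuous_on ({0..} \<times> S) (\<lambda>(s,x). e x s)" by (rule continuous_on_swap_args[OF e_cont])
      have c2: "continuous_on ({0..} \<times> S) (\<lambda>(s,x). et x s)" by (rule continuous_on_swap_args[OF et_cont])
      have "continuous_on ({0..} \<times> S) (\<lambda>p. 2 * (case p of (s,x) \<Rightarrow> e x s) * (case p of (s,x) \<Rightarrow> et x s))"
        by (intro continuous_intros c1 c2)
      thus "continuous_on ({0..} \<times> cbox (-pi) pi) (\<lambda>(s,x). 2 * e x s * et x s)"
        by (simp add: split_beta S_def)
    qed (use t in \<open>auto simp: convex_real_interval\<close>)
    thus ?thesis by (simp add: y_def[abs_def] y'_def S_def)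
  qed
  have ydiff: "y' t \<le> - (a/2) * y t + 2 * c\<^sup>2 / a" if t: "t \<ge> 0" for t
  proof -
    define E where "E = integral S (\<lambda>x. e x t * (et x t + Kp * e x t))"
    have en: "E \<le> D2/2 * y t + (D1 * L2norm (\<lambda>x. rhox x t) + D2 * L2norm (\<lambda>x. rho x t)) * L2norm (\<lambda>x. e x t)"
      unfolding E_def y_def
    proof (rule energy[where e="\<lambda>x. e x t" and ex="\<lambda>x. ex x t" and r="\<lambda>x. rho x t" and rx="\<lambda>x. rhox x t"
          and dd="\<lambda>x. d x t" and ddx="\<lambda>x. dx x t" and W="\<lambda>x. et x t + Kp * e x t"])
      show "continuous_on S (\<lambda>x. et x t + Kp * e x t)" by (intro continuous_intros cet ce t)
    qed (use t e_x rho_x d_x cex crx pde e_per rho_per d_per d_bound dx_bound in auto)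
    have yE: "y' t = 2 * E - 2 * Kp * y t"
    proof -
      have "integral S (\<lambda>x. 2 * (e x t * (et x t + Kp * e x t)) - 2 * Kp * (e x t)\<^sup>2)
          = integral S (\<lambda>x. 2 * (e x t * (et x t + Kp * e x t))) - integral S (\<lambda>x. 2 * Kp * (e x t)\<^sup>2)"
        by (rule integral_diff) (intro int_S continuous_intros ce cet t)+
      moreover have "(\<lambda>x. 2 * (e x t * (et x t + Kp * e x t)) - 2 * Kp * (e x t)\<^sup>2) = (\<lambda>x. 2 * e x t * et x t)"
        by (auto simp: power2_eq_square algebra_simps)
      ultimately show ?thesis by (simp add: y'_def E_def y_def)
    qed
    define s where "s = L2norm (\<lambda>x. e x t)"
    have s0: "s \<ge> 0" unfolding s_def by (rule L2_nonneg)
    have ss: "s\<^sup>2 = y t" using y0[of t] by (simp add: s_def L2norm_def y_def)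
    have "D1 * L2norm (\<lambda>x. rhox x t) \<le> D1 * L" using rhox_L2 t D1_pos by simp
    moreover have "D2 * L2norm (\<lambda>x. rho x t) \<le> D2 * M" using rho_L2 t D2_pos by simp
    ultimately have "(D1 * L2norm (\<lambda>x. rhox x t) + D2 * L2norm (\<lambda>x. rho x t)) * s \<le> c * s"
      using s0 by (intro mult_right_mono) (auto simp: c_def algebra_simps)
    hence "y' t \<le> - a * y t + 2 * c * s" using en yE unfolding s_def a_def by (simp add: algebra_simps)
    moreover have "2 * c * s \<le> (a/2) * s\<^sup>2 + 2 * c\<^sup>2 / a"
    proof -
      have "0 \<le> (a/2) * (s - 2*c/a)\<^sup>2" using a_pos by simp
      also have "(a/2) * (s - 2*c/a)\<^sup>2 = (a/2) * s\<^sup>2 + 2 * c\<^sup>2 / a - 2 * c * s"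
        using a_pos by (simp add: field_simps power2_eq_square)
      finally show ?thesis by simp
    qed
    ultimately show ?thesis using ss by simp
  qed
  define g where "g t = (y t - K) * exp (a/2 * t)" for t
  define g' where "g' t = y' t * exp (a/2 * t) + (y t - K) * (exp (a/2 * t) * (a/2))" for t
  have dg: "(g has_real_derivative g' t) (at t within {0..})" if "t \<ge> 0" for t
  proof -
    have e1: "((\<lambda>s. exp (a/2 * s)) has_real_derivative exp (a/2 * t) * (a/2)) (at t within {0..})"
      by (auto intro!: derivative_eq_intros)
    show ?thesis unfolding g_def g'_def
      using DERIV_mult[OF DERIV_diff[OF dy[OF that] DERIV_const[of K]] e1] by (simp add: algebra_simps)
  qed
  have g'0: "g' t \<le> 0" if "t \<ge> 0" for t
  proof -
    have aK: "a/2 * K = 2 * c\<^sup>2 / a" using a_pos by (simp add: K_def field_simps power2_eq_square)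
    have "g' t = exp (a/2 * t) * (y' t + (a/2) * y t - a/2 * K)" by (simp add: g'_def field_simps)
    also have "\<dots> \<le> 0" using ydiff[OF that] aK by (intro mult_nonneg_nonpos) auto
    finally show ?thesis .
  qed
  define C where "C = \<bar>y 0 - K\<bar>"
  have yb: "y t \<le> K + C * exp (- (a/2) * t)" if t: "t \<ge> 0" for t
  proof -
    have "g t \<le> g 0" by (rule nonincr[OF dg g'0 t])
    hence "g t \<le> y 0 - K" by (simp add: g_def)
    hence h1: "g t * exp (- (a/2) * t) \<le> (y 0 - K) * exp (- (a/2) * t)"
      by (intro mult_right_mono) auto
    have h2: "g t * exp (- (a/2) * t) = y t - K"
      by (simp add: g_def mult.assoc flip: exp_add)
    have h3: "(y 0 - K) * exp (- (a/2) * t) \<le> C * exp (- (a/2) * t)"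
      by (intro mult_right_mono) (auto simp: C_def)
    show ?thesis using h1 h2 h3 by linarith
  qed
  have Ln: "L2norm (\<lambda>x. e x t) = sqrt (y t)" for t by (simp add: L2norm_def y_def)
  have part1: "\<exists>B. \<forall>t\<ge>0. (L2norm (\<lambda>x. e x t))\<^sup>2 \<le> B"
  proof (intro exI allI impI)
    fix t :: real assume t: "t \<ge> 0"
    have "exp (- (a/2) * t) \<le> 1" using a_pos t by (simp add: mult_nonneg_nonneg)
    hence "C * exp (- (a/2) * t) \<le> C * 1" by (intro mult_left_mono) (auto simp: C_def)
    thus "(L2norm (\<lambda>x. e x t))\<^sup>2 \<le> K + C" using yb[OF t] y0[of t] by (simp add: Ln)
  qed
  have lim: "((\<lambda>t. sqrt (K + C * exp (- (a/2) * t))) \<longlongrightarrow> sqrt K) at_top"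
  proof -
    have "((\<lambda>t. exp (- (a/2) * t)) \<longlongrightarrow> 0) at_top" using a_pos by real_asymp
    hence "((\<lambda>t. sqrt (K + C * exp (- (a/2) * t))) \<longlongrightarrow> sqrt (K + C * 0)) at_top"
      by (intro tendsto_intros)
    thus ?thesis by simp
  qed
  have "Limsup at_top (\<lambda>t. ereal (L2norm (\<lambda>x. e x t)))
      \<le> Limsup at_top (\<lambda>t. ereal (sqrt (K + C * exp (- (a/2) * t))))"
  proof (rule Limsup_mono)
    show "\<forall>\<^sub>F t in at_top. ereal (L2norm (\<lambda>x. e x t)) \<le> ereal (sqrt (K + C * exp (- (a/2) * t)))"
      using eventually_ge_at_top[of "0::real"]
    proof eventually_elim
      case (elim t)
      show ?case using yb[OF elim] by (simp add: Ln)
    qed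
  qed
  also have "\<dots> = ereal (sqrt K)"
    by (rule lim_imp_Limsup) (use lim in auto)
  also have "sqrt K = 2 * c / a"
  proof -
    have "K = (2 * c / a)\<^sup>2" by (simp add: K_def power_divide)
    thus ?thesis using c0 a_pos by simp
  qed
  also have "2 * c / a \<le> (2 * L * D1 + 2 * M * D2) / (kappa - D2)"
  proof -
    have "2 * c / a \<le> 2 * c / (kappa - D2)"
      by (rule divide_left_mono) (use c0 a_pos kappa_gt Kp_kappa in \<open>auto simp: a_def\<close>)
    thus ?thesis by (simp add: c_def algebra_simps)
  qed
  finally show ?thesis using part1 by simp
qed

end
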